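(* Fix $N\ge 1$ and let $\{\xi_{i,j}(s):1\le i,j\le N, s\ge 1\}$ be i.i.d. real random variables. Let $\Delta_N=\{y\in\mathbb R^N: y_1\ge y_2\ge\dots\ge y_N\}$ and define the Markov chain $Y$ on $\Delta_N$ by $$Y(t+1)=\text{ordered (non-increasing) vector of }\Big(\max_{1\le j\le N}\{Y_j(t)+\xi_{i,j}(t+1)\},\ 1\le i\le N\Big),$$ started from an arbitrary $Y(0)\in\Delta_N$. Let $Y^0(t)=Y(t)-Y_1(t)\mathbf 1$ (with $\mathbf 1=(1,\dots,1)$) be the process seen from the leading edge, a Markov chain on $\Delta_N^0=\{y\in\Delta_N:y_1=0\}$, and let $\nu_t$ be the law of $Y^0(t)$. Then there exists a unique invariant probability measure $\nu$ for $Y^0$, $\lim_{t\to\infty}\nu_t=\nu$, and there exists $\delta_N>0$ (independent of $Y(0)$) such that $\|\nu_t-\nu\|_{TV}\le(1-\delta_N)^t$ for all $t$.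
   Context: $\|\cdot\|_{TV}$ is the total variation distance. *)

theory Defs
  imports "HOL-Probability.Probability"
begin

text \<open>States: vectors in R^N, represented as extensional functions on the index set {..<N}
  (index 0 is the leading coordinate y_1).\<close>

definition stateM :: "nat \<Rightarrow> (nat \<Rightarrow> real) measure" where
  "stateM N = PiM {..<N} (\<lambda>_. borel)"

definition Delta :: "nat \<Rightarrow> (nat \<Rightarrow> real) set" where
  "Delta N = {y \<in> space (stateM N). \<forall>i j. i \<le> j \<longrightarrow> j < N \<longrightarrow> y j \<le> y i}"

definition Delta0 :: "nat \<Rightarrow> (nat \<Rightarrow> real) set" where
  "Delta0 N = {y \<in> Delta N. y 0 = 0}"

definition ord_desc :: "nat \<Rightarrow> (nat \<Rightarrow> real) \<Rightarrow> (nat \<Rightarrow> real)" where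
  "ord_desc N v = (\<lambda>k\<in>{..<N}. rev (sort (map v [0..<N])) ! k)"

definition step :: "nat \<Rightarrow> (nat \<Rightarrow> real) \<Rightarrow> (nat \<Rightarrow> nat \<Rightarrow> real) \<Rightarrow> (nat \<Rightarrow> real)" where
  "step N y x = ord_desc N (\<lambda>i. Max ((\<lambda>j. y j + x i j) ` {..<N}))"

definition shift0 :: "nat \<Rightarrow> (nat \<Rightarrow> real) \<Rightarrow> (nat \<Rightarrow> real)" where
  "shift0 N y = (\<lambda>i\<in>{..<N}. y i - y 0)"

fun Yproc :: "nat \<Rightarrow> (nat \<Rightarrow> nat \<Rightarrow> nat \<Rightarrow> 'a \<Rightarrow> real) \<Rightarrow> (nat \<Rightarrow> real) \<Rightarrow> nat \<Rightarrow> 'a \<Rightarrow> (nat \<Rightarrow> real)" where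
  "Yproc N \<xi> y0 0 \<omega> = y0"
| "Yproc N \<xi> y0 (Suc t) \<omega> = step N (Yproc N \<xi> y0 t \<omega>) (\<lambda>i j. \<xi> i j (Suc t) \<omega>)"

definition kernel0 :: "'a measure \<Rightarrow> nat \<Rightarrow> (nat \<Rightarrow> nat \<Rightarrow> nat \<Rightarrow> 'a \<Rightarrow> real) \<Rightarrow> (nat \<Rightarrow> real) \<Rightarrow> (nat \<Rightarrow> real) measure" where
  "kernel0 M N \<xi> y = distr M (stateM N) (\<lambda>\<omega>. shift0 N (step N y (\<lambda>i j. \<xi> i j 1 \<omega>)))"

definition invariant0 :: "'a measure \<Rightarrow> nat \<Rightarrow> (nat \<Rightarrow> nat \<Rightarrow> nat \<Rightarrow> 'a \<Rightarrow> real) \<Rightarrow> (nat \<Rightarrow> real) measure \<Rightarrow> bool" where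
  "invariant0 M N \<xi> \<nu> \<longleftrightarrow> sets \<nu> = sets (stateM N) \<and> prob_space \<nu> \<and> emeasure \<nu> (Delta0 N) = 1 \<and>
     (\<forall>A \<in> sets (stateM N). emeasure \<nu> A = (\<integral>\<^sup>+ y. emeasure (kernel0 M N \<xi> y) A \<partial>\<nu>))"

definition tv_dist :: "'b measure \<Rightarrow> 'b measure \<Rightarrow> real" where
  "tv_dist \<mu> \<nu> = (SUP A \<in> sets \<mu>. \<bar>measure \<mu> A - measure \<nu> A\<bar>)"

end

theory Submission
  imports Defs "HOL-Library.Multiset"
begin


lemma space_stateM: "space (stateM N) = PiE {..<N} (\<lambda>_. UNIV)"
  by (simp add: stateM_def space_PiM)

lemma comp_meas[measurable]: "j < N \<Longrightarrow> (\<lambda>y. y j) \<in> borel_measurable (stateM N)"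
  unfolding stateM_def by (rule measurable_component_singleton) auto

lemma Delta_alt: "Delta N = {y \<in> space (stateM N). \<forall>i<N. \<forall>j<N. i \<le> j \<longrightarrow> y j \<le> y i}"
  unfolding Delta_def by auto

lemma Delta_sets[measurable]: assumes "0 < N" shows "Delta N \<in> sets (stateM N)"
proof -
  have "Delta N = space (stateM N) \<inter> (\<Inter>i\<in>{..<N}. \<Inter>j\<in>{..<N}. {y \<in> space (stateM N). i \<le> j \<longrightarrow> y j \<le> y i})"
    unfolding Delta_alt by auto
  also have "\<dots> \<in> sets (stateM N)"
  proof (intro sets.Int sets.top sets.finite_INT)
    fix i j assume "i \<in> {..<N}" "j \<in> {..<N}"
    then have [measurable]: "i < N" "j < N" by auto
    show "{y \<in> space (stateM N). i \<le> j \<longrightarrow> y j \<le> y i} \<in> sets (stateM N)"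
      by (cases "i \<le> j") simp_all
  qed (use assms in auto)
  finally show ?thesis .
qed

lemma Delta0_sets[measurable]: assumes "0 < N" shows " Delta0 N \<in> sets (stateM N)"
proof -
  have "Delta0 N = Delta N \<inter> {y \<in> space (stateM N). y 0 = 0}" by (auto simp: Delta0_def Delta_def)
  also have "\<dots> \<in> sets (stateM N)" using assms by measurable
  finally show ?thesis .
qed

lemma sort_map_add: "sort (map (\<lambda>a. a + c) xs) = map (\<lambda>a. a + (c::real)) (sort xs)"
proof (rule properties_for_sort)
  show "mset (map (\<lambda>a. a + c) (sort xs)) = mset (map (\<lambda>a. a + c) xs)" by simp
  show "sorted (map (\<lambda>a. a + c) (sort xs))"
    by (simp add: sorted_map)
qed

lemma ord_desc_shift:
  assumes "\<And>i. i < N \<Longrightarrow> v' i = v i + c" "k < N"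
  shows "ord_desc N v' k = ord_desc N v k + c"
proof -
  have "map v' [0..<N] = map (\<lambda>a. a + c) (map v [0..<N])" using assms(1) by simp
  then show ?thesis using assms(2)
    by (simp add: ord_desc_def sort_map_add rev_map del: map_map)
qed

lemma shift0_add:
  assumes "\<And>i. i < N \<Longrightarrow> w' i = w i + c" "0 < N"
  shows "shift0 N w' = shift0 N w"
  using assms unfolding shift0_def by (auto intro!: restrict_ext)

lemma ord_desc_shift0:
  assumes "\<And>i. i < N \<Longrightarrow> v' i = v i + c" "0 < N"
  shows "shift0 N (ord_desc N v') = shift0 N (ord_desc N v)"
  by (rule shift0_add[OF _ assms(2)]) (rule ord_desc_shift[OF assms(1)])

lemma step_shift0:
  assumes "\<And>j. j < N \<Longrightarrow> y' j = y j + c" "0 < N"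
  shows "shift0 N (step N y' x) = shift0 N (step N y x)"
  unfolding step_def
proof (rule ord_desc_shift0[OF _ assms(2)])
  fix i assume "i < N"
  have "(\<lambda>j. y' j + x i j) ` {..<N} = (\<lambda>j. (y j + x i j) + c) ` {..<N}"
    using assms(1) by (auto simp: algebra_simps)
  then show "Max ((\<lambda>j. y' j + x i j) ` {..<N}) = Max ((\<lambda>j. y j + x i j) ` {..<N}) + c"
  proof -
    have "{..<N} \<noteq> {}" using assms(2) by auto
    then show ?thesis using \<open>(\<lambda>j. y' j + x i j) ` {..<N} = _\<close> Max_add_commute[of "{..<N}" "\<lambda>j. y j + x i j" c] by simp
  qed
qed

lemma step_cong:
  assumes "\<And>i j. i < N \<Longrightarrow> j < N \<Longrightarrow> x i j = x' i j" "\<And>j. j < N \<Longrightarrow> y j = y' j"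
  shows "step N y x = step N y' x'"
proof -
  have "\<And>i. i < N \<Longrightarrow> (\<lambda>j. y j + x i j) ` {..<N} = (\<lambda>j. y' j + x' i j) ` {..<N}"
    using assms by auto
  then have eq: "map (\<lambda>i. Max ((\<lambda>j. y j + x i j) ` {..<N})) [0..<N] = map (\<lambda>i. Max ((\<lambda>j. y' j + x' i j) ` {..<N})) [0..<N]"
    by simp
  show ?thesis unfolding step_def ord_desc_def eq ..
qed

lemma step_shift0_shift0:
  assumes "0 < N"
  shows "shift0 N (step N (shift0 N y) x) = shift0 N (step N y x)"
  by (rule step_shift0[where c="- y 0"]) (use assms in \<open>auto simp: shift0_def\<close>)

lemma ord_desc_Delta: "ord_desc N v \<in> Delta N"
proof -
  let ?s = "sort (map v [0..<N])"
  have len: "length ?s = N" by simp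
  have "rev ?s ! j \<le> rev ?s ! i" if "i \<le> j" "j < N" for i j
    using that len by (simp add: rev_nth sorted_nth_mono)
  then show ?thesis
    by (auto simp: Delta_def ord_desc_def space_stateM)
qed

lemma step_Delta: "step N y x \<in> Delta N"
  unfolding step_def by (rule ord_desc_Delta)

lemma shift0_Delta0:
  assumes "y \<in> Delta N" "0 < N"
  shows "shift0 N y \<in> Delta0 N"
  using assms by (auto simp: Delta0_def Delta_def shift0_def space_stateM)

lemma Delta0_subset: "Delta0 N \<subseteq> Delta N" by (auto simp: Delta0_def)

lemma step_regen:
  assumes "y \<in> Delta N" "0 < N" "\<And>i j. i < N \<Longrightarrow> j < N \<Longrightarrow> x i j \<le> x i 0"
  shows "shift0 N (step N y x) = shift0 N (ord_desc N (\<lambda>i. x i 0))"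
  unfolding step_def
proof (rule ord_desc_shift0[where c="y 0", OF _ assms(2)])
  fix i assume i: "i < N"
  show "Max ((\<lambda>j. y j + x i j) ` {..<N}) = x i 0 + y 0"
  proof (rule Max_eqI)
    fix z assume z: "z \<in> (\<lambda>j. y j + x i j) ` {..<N}"
    show "z \<le> x i 0 + y 0"
    proof -
      obtain j where j: "j < N" "z = y j + x i j" using z by auto
      have "y j \<le> y 0" using assms(1) j by (auto simp: Delta_def)
      moreover have "x i j \<le> x i 0" using assms(3)[OF i j(1)] .
      ultimately show ?thesis using j by simp
    qed
  next
    show "x i 0 + y 0 \<in> (\<lambda>j. y j + x i j) ` {..<N}" using assms(2) by force
  qed simp
qed

lemma rev_sort_le_iff:
  fixes xs :: "real list"
  assumes k: "k < length xs"
  shows "(rev (sort xs) ! k \<le> a) \<longleftrightarrow> card {i. i < length xs \<and> a < xs ! i} \<le> k"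
proof -
  let ?ys = "rev (sort xs)"
  have len: "length ?ys = length xs" by simp
  have desc: "?ys ! j \<le> ?ys ! i" if "i \<le> j" "j < length xs" for i j
    using that by (simp add: rev_nth sorted_nth_mono)
  have "length (filter (\<lambda>x. a < x) xs) = length (filter (\<lambda>x. a < x) ?ys)"
    by (metis mset_filter size_mset mset_rev mset_sort)
  then have c: "card {i. i < length xs \<and> a < xs ! i} = card {i. i < length xs \<and> a < ?ys ! i}"
    by (simp add: length_filter_conv_card)
  show ?thesis
  proof
    assume "?ys ! k \<le> a"
    then have "{i. i < length xs \<and> a < ?ys ! i} \<subseteq> {..<k}"
    proof (intro subsetI)
      fix i assume "i \<in> {i. i < length xs \<and> a < ?ys ! i}"
      then have i: "i < length xs" "a < ?ys ! i" by auto
      show "i \<in> {..<k}"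
      proof (rule ccontr)
        assume "i \<notin> {..<k}"
        then have "k \<le> i" by simp
        then have "?ys ! i \<le> ?ys ! k" using desc i(1) by blast
        then show False using i(2) \<open>?ys ! k \<le> a\<close> by simp
      qed
    qed
    then show "card {i. i < length xs \<and> a < xs ! i} \<le> k"
      unfolding c by (metis card_lessThan card_mono finite_lessThan)
  next
    assume h: "card {i. i < length xs \<and> a < xs ! i} \<le> k"
    show "?ys ! k \<le> a"
    proof (rule ccontr)
      assume "\<not> ?ys ! k \<le> a"
      then have "{..k} \<subseteq> {i. i < length xs \<and> a < ?ys ! i}"
      proof (intro subsetI)
        fix i assume "i \<in> {..k}"
        then have "i \<le> k" by simp
        then have "?ys ! k \<le> ?ys ! i" using desc k by blast
        then show "i \<in> {i. i < length xs \<and> a < ?ys ! i}" using \<open>i \<le> k\<close> k \<open>\<not> ?ys ! k \<le> a\<close> by simp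
      qed
      then have "card {..k} \<le> card {i. i < length xs \<and> a < ?ys ! i}"
        by (rule card_mono[rotated]) auto
      then show False using h c by simp
    qed
  qed
qed

lemma card_filter_sum: assumes "finite A" shows "real (card {i\<in>A. P i}) = (\<Sum>i\<in>A. if P i then 1 else 0)"
proof -
  have "real (card {i\<in>A. P i}) = (\<Sum>i\<in>{i\<in>A. P i}. (1::real))" by simp
  also have "\<dots> = (\<Sum>i\<in>A. if P i then 1 else 0)" by (rule sum.inter_filter[OF assms])
  finally show ?thesis .
qed

lemma os_measurable:
  fixes f :: "nat \<Rightarrow> 'a \<Rightarrow> real"
  assumes f: "\<And>i. i < N \<Longrightarrow> f i \<in> borel_measurable M" and k: "k < N"
  shows "(\<lambda>\<omega>. rev (sort (map (\<lambda>i. f i \<omega>) [0..<N])) ! k) \<in> borel_measurable M"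
proof (subst borel_measurable_iff_le, intro allI)
  fix a :: real
  have g: "(\<lambda>\<omega>. \<Sum>i\<in>{..<N}. if a < f i \<omega> then 1 else 0 :: real) \<in> borel_measurable M"
  proof (rule borel_measurable_sum)
    fix i assume "i \<in> {..<N}"
    then have [measurable]: "f i \<in> borel_measurable M" using f by auto
    show "(\<lambda>\<omega>. if a < f i \<omega> then 1 else 0 :: real) \<in> borel_measurable M" by measurable
  qed
  have "{w \<in> space M. rev (sort (map (\<lambda>i. f i w) [0..<N])) ! k \<le> a}
      = {w \<in> space M. (\<Sum>i\<in>{..<N}. if a < f i w then 1 else 0 :: real) \<le> real k}"
  proof -
    have "card {i. i < length (map (\<lambda>i. f i w) [0..<N]) \<and> a < map (\<lambda>i. f i w) [0..<N] ! i} = card {i\<in>{..<N}. a < f i w}" for w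
      by (rule arg_cong[where f=card]) auto
    then show ?thesis using k
      by (subst rev_sort_le_iff) (auto simp: card_filter_sum[symmetric])
  qed
  also have "\<dots> \<in> sets M" using g by measurable
  finally show "{w \<in> space M. rev (sort (map (\<lambda>i. f i w) [0..<N])) ! k \<le> a} \<in> sets M" .
qed

lemma meas_into_stateM:
  assumes "\<And>k. k < N \<Longrightarrow> (\<lambda>x. g x k) \<in> borel_measurable L"
  shows "(\<lambda>x. \<lambda>k\<in>{..<N}. g x k) \<in> measurable L (stateM N)"
  unfolding stateM_def by (rule measurable_restrict) (use assms in auto)

definition matM :: "nat \<Rightarrow> (nat \<times> nat \<Rightarrow> real) measure" where
  "matM N = PiM ({..<N} \<times> {..<N}) (\<lambda>_. borel)"

definition Phi :: "nat \<Rightarrow> (nat \<Rightarrow> real) \<Rightarrow> (nat \<times> nat \<Rightarrow> real) \<Rightarrow> (nat \<Rightarrow> real)" where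
  "Phi N y x = shift0 N (step N y (\<lambda>i j. x (i, j)))"

lemma step_measurable:
  "(\<lambda>(y, x). step N y (\<lambda>i j. x (i, j))) \<in> measurable (stateM N \<Otimes>\<^sub>M matM N) (stateM N)"
proof -
  have mx: "(\<lambda>p. Max ((\<lambda>j. fst p j + snd p (i, j)) ` {..<N})) \<in> borel_measurable (stateM N \<Otimes>\<^sub>M matM N)"
    if i: "i < N" for i
  proof (rule borel_measurable_Max)
    fix j assume "j \<in> {..<N}"
    then have j: "j < N" by auto
    have [measurable]: "(\<lambda>p. fst p j) \<in> borel_measurable (stateM N \<Otimes>\<^sub>M matM N)"
      using j by measurable
    have [measurable]: "(\<lambda>p. snd p (i, j)) \<in> borel_measurable (stateM N \<Otimes>\<^sub>M matM N)"
    proof -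
      have "(i, j) \<in> {..<N} \<times> {..<N}" using i j by auto
      then show ?thesis unfolding matM_def
        by (intro measurable_compose[OF measurable_snd] measurable_component_singleton)
    qed
    show "(\<lambda>p. fst p j + snd p (i, j)) \<in> borel_measurable (stateM N \<Otimes>\<^sub>M matM N)" by measurable
  qed simp
  have "(\<lambda>p. ord_desc N (\<lambda>i. Max ((\<lambda>j. fst p j + snd p (i, j)) ` {..<N}))) \<in> measurable (stateM N \<Otimes>\<^sub>M matM N) (stateM N)"
    unfolding ord_desc_def
    by (rule meas_into_stateM, rule os_measurable) (use mx in auto)
  then show ?thesis unfolding step_def by (simp add: case_prod_beta)
qed

lemma shift0_measurable:
  assumes "0 < N" shows "shift0 N \<in> measurable (stateM N) (stateM N)"
proof -
  have "(\<lambda>y. \<lambda>i\<in>{..<N}. y i - y 0) \<in> measurable (stateM N) (stateM N)"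
    by (rule meas_into_stateM) (use assms in measurable)
  then show ?thesis by (simp add: shift0_def[abs_def])
qed

lemma Phi_measurable:
  assumes "0 < N" shows "(\<lambda>(y, x). Phi N y x) \<in> measurable (stateM N \<Otimes>\<^sub>M matM N) (stateM N)"
  unfolding Phi_def using measurable_comp[OF step_measurable shift0_measurable[OF assms]]
  by (simp add: comp_def case_prod_beta)




lemma exists_split_point:
  fixes mu :: "real measure"
  assumes P: "prob_space mu" and S: "sets mu = sets borel"
  shows "\<exists>m. 0 < emeasure mu {m..} \<and> 0 < emeasure mu {..m}"
proof (rule ccontr)
  assume H: "\<not> ?thesis"
  then have H': "\<And>m. emeasure mu {m..} = 0 \<or> emeasure mu {..m} = 0" by (auto simp: zero_less_iff_neq_zero)
  have sp: "space mu = UNIV" using sets_eq_imp_space_eq[OF S] by simp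
  have meas[simp]: "A \<in> sets mu" if "A \<in> sets borel" for A using that S by simp
  have one: "emeasure mu UNIV = 1" using prob_space.emeasure_space_1[OF P] sp by simp
  have unull: "emeasure mu (\<Union>n. A n) = 0" if "\<And>n. emeasure mu (A n) = 0" "\<And>n. A n \<in> sets borel" for A :: "nat \<Rightarrow> real set"
    by (rule emeasure_UN_eq_0) (use that in auto)
  have mono0: "emeasure mu A = 0" if "A \<subseteq> B" "emeasure mu B = 0" "B \<in> sets borel" for A B
    using that emeasure_eq_0[of B mu A] S by simp
  have add0: "emeasure mu (A \<union> B) = 0" if "emeasure mu A = 0" "emeasure mu B = 0" "A \<in> sets borel" "B \<in> sets borel" for A B
    using that emeasure_subadditive[of A mu B] S by (simp add: le_zero_eq)
  define SS where "SS = {m. emeasure mu {..m} = 0}"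
  show False
  proof (cases "SS = {}")
    case True
    then have "\<And>m. emeasure mu {m..} = 0" using H' unfolding SS_def by blast
    then have "emeasure mu (\<Union>n. {- real n..}) = 0" by (intro unull) auto
    moreover have "(\<Union>n. {- real n..}) = UNIV"
    proof safe
      fix x :: real obtain n where "- x \<le> real n" using real_arch_simple by blast
      then show "x \<in> (\<Union>n. {- real n..})" by (auto intro!: exI[of _ n])
    qed auto
    ultimately show False using one by simp
  next
    case ne: False
    show False
    proof (cases "bdd_above SS")
      case False
      have "emeasure mu {..real n} = 0" for n
      proof -
        obtain m where m: "m \<in> SS" "real n < m" using False by (auto simp: bdd_above_def not_le)
        show ?thesis by (rule mono0[of _ "{..m}"]) (use m in \<open>auto simp: SS_def\<close>)
      qed
      then have "emeasure mu (\<Union>n. {..real n}) = 0" by (intro unull) auto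
      moreover have "(\<Union>n. {..real n}) = UNIV"
      proof safe
        fix x :: real obtain n where "x \<le> real n" using real_arch_simple by blast
        then show "x \<in> (\<Union>n. {..real n})" by (auto intro!: exI[of _ n])
      qed auto
      ultimately show False using one by simp
    next
      case bdd: True
      define c where "c = Sup SS"
      have below: "emeasure mu {..x} = 0" if lt: "x < c" for x
      proof -
        obtain m where m: "m \<in> SS" "x < m" using less_cSupD[OF ne] lt unfolding c_def by blast
        show ?thesis by (rule mono0[of _ "{..m}"]) (use m in \<open>auto simp: SS_def\<close>)
      qed
      have above: "emeasure mu {x..} = 0" if hx: "c < x" for x
      proof -
        have "x \<notin> SS" using cSup_upper[OF _ bdd] that unfolding c_def by force
        then show ?thesis using H' unfolding SS_def by blast
      qed
      show False
      proof (cases "c \<in> SS")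
        case True
        have "emeasure mu (\<Union>n. {c + inverse (real (Suc n))..}) = 0"
          by (intro unull above) auto
        moreover have "(\<Union>n. {c + inverse (real (Suc n))..}) = {c<..}"
        proof -
          have "x \<in> (\<Union>n. {c + inverse (real (Suc n))..})" if hx: "c < x" for x
          proof -
            obtain n where "inverse (real (Suc n)) < x - c" using reals_Archimedean[of "x - c"] hx by auto
            then show ?thesis by (auto intro!: exI[of _ n])
          qed
          moreover have "c < x" if hx: "x \<in> (\<Union>n. {c + inverse (real (Suc n))..})" for x
          proof -
            obtain n where "c + inverse (real (Suc n)) \<le> x" using hx by auto
            moreover have "0 < inverse (real (Suc n))" by simp
            ultimately show ?thesis by linarith
          qed
          ultimately show ?thesis by auto
        qed
        moreover have "emeasure mu {..c} = 0" using True by (simp add: SS_def)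
        moreover have "{..c} \<union> {c<..} = UNIV" by auto
        ultimately show False using one add0[of "{..c}" "{c<..}"] by simp
      next
        case False
        then have "emeasure mu {c..} = 0" using H' unfolding SS_def by blast
        moreover have "emeasure mu (\<Union>n. {..c - inverse (real (Suc n))}) = 0"
          by (intro unull below) auto
        moreover have "(\<Union>n. {..c - inverse (real (Suc n))}) = {..<c}"
        proof -
          have "x \<in> (\<Union>n. {..c - inverse (real (Suc n))})" if hx: "x < c" for x
          proof -
            obtain n where "inverse (real (Suc n)) < c - x" using reals_Archimedean[of "c - x"] hx by auto
            then show ?thesis by (auto intro!: exI[of _ n])
          qed
          moreover have "x < c" if hx: "x \<in> (\<Union>n. {..c - inverse (real (Suc n))})" for x
          proof -
            obtain n where "x \<le> c - inverse (real (Suc n))" using hx by auto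
            moreover have "0 < inverse (real (Suc n))" by simp
            ultimately show ?thesis by linarith
          qed
          ultimately show ?thesis by auto
        qed
        moreover have "{..<c} \<union> {c..} = UNIV" by auto
        ultimately show False using one add0[of "{..<c}" "{c..}"] by simp
      qed
    qed
  qed
qed




lemma prod_ennreal_ne0: "finite A \<Longrightarrow> (\<And>a. a \<in> A \<Longrightarrow> f a \<noteq> (0::ennreal)) \<Longrightarrow> prod f A \<noteq> 0"
  by (induct A rule: finite_induct) auto

lemma Phi_restrict: "Phi N y x = Phi N (\<lambda>j\<in>{..<N}. y j) x"
  unfolding Phi_def by (rule arg_cong[where f="shift0 N"], rule step_cong) auto

lemma Phi_meas_y:
  assumes "0 < N" shows "Phi N y \<in> measurable (matM N) (stateM N)"
proof -
  have y: "(\<lambda>j\<in>{..<N}. y j) \<in> space (stateM N)" by (simp add: space_stateM)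
  have "(\<lambda>x. (\<lambda>(y, x). Phi N y x) ((\<lambda>j\<in>{..<N}. y j), x)) \<in> measurable (matM N) (stateM N)"
    by (rule measurable_Pair2[OF Phi_measurable[OF assms] y])
  then show ?thesis by (subst Phi_restrict[abs_def]) simp
qed

lemma Phi_Delta0: "0 < N \<Longrightarrow> Phi N y x \<in> Delta0 N"
  unfolding Phi_def by (rule shift0_Delta0[OF step_Delta])

lemma Phi_space: "0 < N \<Longrightarrow> Phi N y x \<in> space (stateM N)"
  using Phi_Delta0[of N y x] by (auto simp: Delta0_def Delta_def)

lemma mat_comp_meas: "i < N \<Longrightarrow> j < N \<Longrightarrow> (\<lambda>x. x (i, j)) \<in> borel_measurable (matM N)"
  unfolding matM_def by (rule measurable_component_singleton) auto


locale LPP = prob_space M for M :: "'a measure" +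
  fixes N :: nat and \<xi> :: "nat \<Rightarrow> nat \<Rightarrow> nat \<Rightarrow> 'a \<Rightarrow> real"
  assumes N1: "N \<ge> 1"
    and indep: "indep_vars (\<lambda>_. borel) (\<lambda>(i, j, s). \<xi> i j s) {(i, j, s). i < N \<and> j < N \<and> s \<ge> 1}"
    and ident: "\<And>i j s. i < N \<Longrightarrow> j < N \<Longrightarrow> s \<ge> 1 \<Longrightarrow>
                  distr M borel (\<xi> i j s) = distr M borel (\<xi> 0 0 1)"
begin

abbreviation "IDX \<equiv> {(i, j, s). i < N \<and> j < N \<and> s \<ge> 1}"
abbreviation "I2 \<equiv> {..<N} \<times> {..<N}"

definition X :: "nat \<Rightarrow> 'a \<Rightarrow> (nat \<times> nat \<Rightarrow> real)" where
  "X s \<omega> = (\<lambda>q\<in>I2. \<xi> (fst q) (snd q) s \<omega>)"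

definition "mu = distr M borel (\<xi> 0 0 1)"
definition "muX = distr M (matM N) (X 1)"

lemma N0: "0 < N" using N1 by simp

lemma rv_xi: "i < N \<Longrightarrow> j < N \<Longrightarrow> 1 \<le> s \<Longrightarrow> \<xi> i j s \<in> borel_measurable M"
  using indep unfolding indep_vars_def by fastforce

lemma rv_X: "1 \<le> s \<Longrightarrow> X s \<in> measurable M (matM N)"
  unfolding X_def matM_def by (rule measurable_restrict) (auto intro: rv_xi)

lemma prob_mu: "prob_space mu" unfolding mu_def
  by (rule prob_space_distr) (rule rv_xi, use N0 in auto)

lemma sets_mu: "sets mu = sets borel" by (simp add: mu_def)

lemma law_X:
  assumes s: "1 \<le> s"
  shows "distr M (matM N) (X s) = PiM I2 (\<lambda>_. mu)"
proof -
  define K where "K = {(i, j, s'). i < N \<and> j < N \<and> s' = s}"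
  have KI: "K \<subseteq> IDX" using s by (auto simp: K_def)
  have ind: "indep_vars (\<lambda>_. borel) (\<lambda>(i, j, s). \<xi> i j s) K" by (rule indep_vars_subset[OF indep KI])
  have Kne: "K \<noteq> {}" using N0 s by (auto simp: K_def)
  have rvK: "\<And>k. k \<in> K \<Longrightarrow> random_variable borel ((\<lambda>(i, j, s). \<xi> i j s) k)"
    using s by (auto intro!: rv_xi simp: K_def)
  have D: "distr M (PiM K (\<lambda>_. borel)) (\<lambda>\<omega>. \<lambda>k\<in>K. (\<lambda>(i, j, s). \<xi> i j s) k \<omega>) = PiM K (\<lambda>_. mu)"
  proof -
    have "distr M (PiM K (\<lambda>_. borel)) (\<lambda>\<omega>. \<lambda>k\<in>K. (\<lambda>(i, j, s). \<xi> i j s) k \<omega>)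
        = PiM K (\<lambda>k. distr M borel ((\<lambda>(i, j, s). \<xi> i j s) k))"
      using ind indep_vars_iff_distr_eq_PiM'[OF Kne rvK] by simp
    also have "\<dots> = PiM K (\<lambda>_. mu)"
      using ident s by (intro PiM_cong) (auto simp: K_def mu_def)
    finally show ?thesis .
  qed
  define f where "f = (\<lambda>q::nat \<times> nat. (fst q, snd q, s))"
  have inj: "inj_on f I2" by (auto simp: f_def inj_on_def)
  have fK: "f \<in> I2 \<rightarrow> K" by (auto simp: f_def K_def)
  have meas1: "(\<lambda>\<omega>. \<lambda>k\<in>K. (\<lambda>(i, j, s). \<xi> i j s) k \<omega>) \<in> measurable M (PiM K (\<lambda>_. borel))"
    by (rule measurable_restrict) (use rvK in auto)
  have meas2: "(\<lambda>u. \<lambda>n\<in>I2. u (f n)) \<in> measurable (PiM K (\<lambda>_. borel)) (matM N)"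
    unfolding matM_def
    by (rule measurable_restrict) (use fK in \<open>auto intro!: measurable_component_singleton\<close>)
  have "distr M (matM N) (X s) = distr M (matM N) ((\<lambda>u. \<lambda>n\<in>I2. u (f n)) \<circ> (\<lambda>\<omega>. \<lambda>k\<in>K. (\<lambda>(i, j, s). \<xi> i j s) k \<omega>))"
    by (rule distr_cong) (use fK in \<open>auto simp: X_def f_def K_def\<close>)
  also have "\<dots> = distr (PiM K (\<lambda>_. mu)) (matM N) (\<lambda>u. \<lambda>n\<in>I2. u (f n))"
    by (subst distr_distr[symmetric, OF meas2 meas1]) (simp add: D)
  also have "\<dots> = distr (PiM K (\<lambda>_. mu)) (PiM I2 (\<lambda>i. (\<lambda>_. mu) (f i))) (\<lambda>u. \<lambda>n\<in>I2. u (f n))"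
    by (rule distr_cong) (auto simp: matM_def sets_mu intro!: sets_PiM_cong)
  also have "\<dots> = PiM I2 (\<lambda>i. (\<lambda>_. mu) (f i))"
    by (rule distr_PiM_reindex[OF _ inj fK]) (rule prob_mu)
  finally show ?thesis by simp
qed

lemma muX_eq: "muX = PiM I2 (\<lambda>_. mu)"
  unfolding muX_def by (rule law_X) simp

lemma prob_muX: "prob_space muX" unfolding muX_def by (rule prob_space_distr[OF rv_X]) simp

lemma sets_muX[measurable_cong]: "sets muX = sets (matM N)" by (simp add: muX_def)
lemma space_muX: "space muX = space (matM N)" by (simp add: muX_def)

definition "E = {x \<in> space (matM N). \<forall>i<N. \<forall>j<N. x (i, j) \<le> x (i, 0)}"
definition "Ec = space (matM N) - E"
definition "p = measure muX E"
definition "z0 = (\<lambda>i\<in>{..<N}. 0::real)"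
definition "Lm = distr (density muX (indicator E)) (stateM N) (Phi N z0)"
definition "R y = distr (density muX (indicator Ec)) (stateM N) (Phi N y)"

lemma E_sets: "E \<in> sets (matM N)"
proof -
  have "E = space (matM N) \<inter> (\<Inter>i\<in>{..<N}. \<Inter>j\<in>{..<N}. {x \<in> space (matM N). x (i, j) \<le> x (i, 0)})"
    unfolding E_def by auto
  also have "\<dots> \<in> sets (matM N)"
  proof (intro sets.Int sets.top sets.finite_INT)
    fix i j assume "i \<in> {..<N}" "j \<in> {..<N}"
    then have [measurable]: "(\<lambda>x. x (i, j)) \<in> borel_measurable (matM N)" "(\<lambda>x. x (i, 0)) \<in> borel_measurable (matM N)"
      using mat_comp_meas N0 by auto
    show "{x \<in> space (matM N). x (i, j) \<le> x (i, 0)} \<in> sets (matM N)" by measurable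
  qed (use N0 in auto)
  finally show ?thesis .
qed

lemma Ec_sets: "Ec \<in> sets (matM N)" unfolding Ec_def using E_sets by auto

lemma emeasure_muX_E: "emeasure muX E = ennreal p"
proof -
  interpret PX: prob_space muX by (rule prob_muX)
  show ?thesis unfolding p_def by (simp add: PX.emeasure_eq_measure)
qed

lemma emeasure_muX_Ec: "emeasure muX Ec = ennreal (1 - p)"
proof -
  interpret PX: prob_space muX by (rule prob_muX)
  have "emeasure muX Ec = ennreal (measure muX (space muX - E))"
    unfolding Ec_def space_muX[symmetric] by (simp add: PX.emeasure_eq_measure)
  also have "measure muX (space muX - E) = 1 - p"
    unfolding p_def by (rule PX.prob_compl) (simp add: E_sets sets_muX)
  finally show ?thesis .
qed

lemma p_le1: "p \<le> 1"
  unfolding p_def using prob_muX by (simp add: prob_space.prob_le_1)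

lemma p_pos: "0 < p"
proof -
  obtain m where m: "0 < emeasure mu {m..}" "0 < emeasure mu {..m}"
    using exists_split_point[OF prob_mu sets_mu] by blast
  define B where "B = PiE I2 (\<lambda>q. if snd q = 0 then {m..} else {..m})"
  interpret PS: product_sigma_finite "\<lambda>_::nat\<times>nat. mu"
    unfolding product_sigma_finite_def using prob_space_imp_sigma_finite[OF prob_mu] by simp
  have "emeasure (PiM I2 (\<lambda>_. mu)) B = (\<Prod>q\<in>I2. emeasure mu (if snd q = 0 then {m..} else {..m}))"
    unfolding B_def by (rule PS.emeasure_PiM) (auto simp: sets_mu)
  also have "\<dots> \<noteq> 0"
    using m by (intro prod_ennreal_ne0) auto
  finally have Bpos: "emeasure muX B \<noteq> 0" by (simp add: muX_eq)
  have "B \<subseteq> E"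
  proof
    fix x assume x: "x \<in> B"
    have "x \<in> space (matM N)" using x by (auto simp: B_def matM_def space_PiM)
    moreover have "x (i, j) \<le> x (i, 0)" if "i < N" "j < N" for i j
    proof (cases "j = 0")
      case False
      have h: "x q \<in> (if snd q = 0 then {m..} else {..m})" if "q \<in> I2" for q
        using x that unfolding B_def by (rule PiE_mem)
      have "x (i, j) \<in> {..m}" using h[of "(i, j)"] that False by simp
      moreover have "x (i, 0) \<in> {m..}" using h[of "(i, 0)"] that N0 by simp
      ultimately have "x (i, j) \<le> m" "m \<le> x (i, 0)" by auto
      then show ?thesis by simp
    qed simp
    ultimately show "x \<in> E" by (auto simp: E_def)
  qed
  then have "emeasure muX B \<le> emeasure muX E"
    by (intro emeasure_mono) (auto simp: E_sets sets_muX)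
  then have "ennreal p \<noteq> 0" using Bpos by (auto simp: emeasure_muX_E)
  then show ?thesis using p_le1 unfolding p_def by (simp add: zero_less_measure_iff)
qed


lemma kernel0_eq: "kernel0 M N \<xi> y = distr muX (stateM N) (Phi N y)"
proof -
  let ?y = "\<lambda>j\<in>{..<N}. y j"
  have "kernel0 M N \<xi> y = distr M (stateM N) (Phi N ?y \<circ> X 1)"
    unfolding kernel0_def
  proof (rule distr_cong)
    fix \<omega> assume "\<omega> \<in> space M"
    show "shift0 N (step N y (\<lambda>i j. \<xi> i j 1 \<omega>)) = (Phi N ?y \<circ> X 1) \<omega>"
      unfolding Phi_def comp_def by (rule arg_cong[where f="shift0 N"], rule step_cong) (auto simp: X_def)
  qed auto
  also have "\<dots> = distr muX (stateM N) (Phi N ?y)"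
    unfolding muX_def by (rule distr_distr[symmetric, OF Phi_meas_y[OF N0] rv_X]) simp
  also have "\<dots> = distr muX (stateM N) (Phi N y)"
    by (subst (2) Phi_restrict[abs_def]) simp
  finally show ?thesis .
qed

lemma z0_Delta: "z0 \<in> Delta N"
  by (auto simp: z0_def Delta_def space_stateM)

lemma Phi_regen:
  assumes "y \<in> Delta N" "x \<in> E"
  shows "Phi N y x = Phi N z0 x"
proof -
  have c: "\<And>i j. i < N \<Longrightarrow> j < N \<Longrightarrow> (\<lambda>i j. x (i, j)) i j \<le> (\<lambda>i j. x (i, j)) i 0"
    using assms(2) by (auto simp: E_def)
  show ?thesis unfolding Phi_def
    using step_regen[where x="\<lambda>i j. x (i, j)", OF assms(1) N0 c] step_regen[where x="\<lambda>i j. x (i, j)", OF z0_Delta N0 c] by simp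
qed

lemma sets_Lm[measurable_cong]: "sets Lm = sets (stateM N)" by (simp add: Lm_def)
lemma sets_R[measurable_cong]: "sets (R y) = sets (stateM N)" by (simp add: R_def)
lemma space_Lm: "space Lm = space (stateM N)" by (simp add: Lm_def)
lemma space_R: "space (R y) = space (stateM N)" by (simp add: R_def)

lemma emeasure_Lm: "A \<in> sets (stateM N) \<Longrightarrow> emeasure Lm A = emeasure muX (E \<inter> (Phi N z0 -` A \<inter> space muX))"
  unfolding Lm_def
  by (subst emeasure_distr) (auto simp: Phi_meas_y[OF N0] emeasure_restricted E_sets sets_muX space_muX
       intro!: emeasure_restricted measurable_sets[OF Phi_meas_y[OF N0]] cong: measurable_cong_sets)

lemma emeasure_R: "A \<in> sets (stateM N) \<Longrightarrow> emeasure (R y) A = emeasure muX (Ec \<inter> (Phi N y -` A \<inter> space muX))"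
  unfolding R_def
  by (subst emeasure_distr) (auto simp: Phi_meas_y[OF N0] emeasure_restricted Ec_sets sets_muX space_muX
       intro!: emeasure_restricted measurable_sets[OF Phi_meas_y[OF N0]] cong: measurable_cong_sets)


lemma Phi_meas_muX: "Phi N y \<in> measurable muX (stateM N)"
  using Phi_meas_y[OF N0] by (simp add: sets_muX cong: measurable_cong_sets)

lemma space_stateM_ne: "space (stateM N) \<noteq> {}"
  by (auto simp: space_stateM PiE_eq_empty_iff)

lemma K_split:
  assumes y: "y \<in> Delta N" and A: "A \<in> sets (stateM N)"
  shows "emeasure (kernel0 M N \<xi> y) A = emeasure Lm A + emeasure (R y) A"
proof -
  let ?S = "Phi N y -` A \<inter> space muX"
  have S: "?S \<in> sets muX" using measurable_sets[OF Phi_meas_y[OF N0] A] by (simp add: space_muX sets_muX)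
  have ES: "E \<inter> ?S \<in> sets muX" "Ec \<inter> ?S \<in> sets muX" using S E_sets Ec_sets by (auto simp: sets_muX)
  have "emeasure (kernel0 M N \<xi> y) A = emeasure muX ?S"
    unfolding kernel0_eq using A by (simp add: emeasure_distr Phi_meas_muX)
  also have "?S = (E \<inter> ?S) \<union> (Ec \<inter> ?S)" by (auto simp: Ec_def space_muX)
  also have "emeasure muX \<dots> = emeasure muX (E \<inter> ?S) + emeasure muX (Ec \<inter> ?S)"
    by (rule plus_emeasure[symmetric, OF ES]) (auto simp: Ec_def)
  also have "E \<inter> ?S = E \<inter> (Phi N z0 -` A \<inter> space muX)"
    using Phi_regen[OF y] by auto
  finally show ?thesis using A by (simp add: emeasure_Lm emeasure_R)
qed

lemma Lm_space: "emeasure Lm (space (stateM N)) = ennreal p"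
proof -
  have "E \<inter> (Phi N z0 -` space (stateM N) \<inter> space muX) = E"
    using Phi_space[OF N0] by (auto simp: space_muX E_def)
  then show ?thesis by (simp add: emeasure_Lm emeasure_muX_E)
qed

lemma R_space: "emeasure (R y) (space (stateM N)) = ennreal (1 - p)"
proof -
  have "Ec \<inter> (Phi N y -` space (stateM N) \<inter> space muX) = Ec"
    using Phi_space[OF N0] by (auto simp: space_muX Ec_def)
  then show ?thesis by (simp add: emeasure_R emeasure_muX_Ec)
qed

lemma Lm_Delta0: "emeasure Lm (space (stateM N) - Delta0 N) = 0"
proof -
  have "E \<inter> (Phi N z0 -` (space (stateM N) - Delta0 N) \<inter> space muX) = {}"
    using Phi_Delta0[OF N0] by auto
  then show ?thesis using Delta0_sets[OF N0] by (simp add: emeasure_Lm)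
qed

lemma R_Delta0: "emeasure (R y) (space (stateM N) - Delta0 N) = 0"
proof -
  have "Ec \<inter> (Phi N y -` (space (stateM N) - Delta0 N) \<inter> space muX) = {}"
    using Phi_Delta0[OF N0] by auto
  then show ?thesis using Delta0_sets[OF N0] by (simp add: emeasure_R)
qed

lemma subprob_Lm: "subprob_space Lm"
  by (rule subprob_spaceI) (auto simp: space_Lm Lm_space p_le1 space_stateM_ne)

lemma subprob_R: "subprob_space (R y)"
  by (rule subprob_spaceI) (use p_pos in \<open>auto simp: space_R R_space space_stateM_ne\<close>)

lemma subprob_dens: "subprob_space (density muX (indicator S))" if "S \<in> sets muX"
proof (rule subprob_spaceI)
  interpret PX: prob_space muX by (rule prob_muX)
  show "emeasure (density muX (indicator S)) (space (density muX (indicator S))) \<le> 1"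
    using that by (simp add: emeasure_restricted PX.emeasure_le_1)
  show "space (density muX (indicator S)) \<noteq> {}" using PX.not_empty by simp
qed

lemma R_meas: "R \<in> measurable (stateM N) (subprob_algebra (stateM N))"
proof -
  have "(\<lambda>y. distr (density muX (indicator Ec)) (stateM N) (Phi N y)) \<in> measurable (stateM N) (subprob_algebra (stateM N))"
  proof (rule measurable_distr2)
    show "(\<lambda>(y, x). Phi N y x) \<in> measurable (stateM N \<Otimes>\<^sub>M density muX (indicator Ec)) (stateM N)"
      using Phi_measurable[OF N0] by (simp add: sets_muX cong: measurable_cong_sets)
    show "(\<lambda>_. density muX (indicator Ec)) \<in> measurable (stateM N) (subprob_algebra (density muX (indicator Ec)))"
      by (rule measurable_const) (auto simp: space_subprob_algebra intro!: subprob_dens simp: Ec_sets sets_muX)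
  qed
  then show ?thesis by (simp add: R_def[abs_def])
qed

lemma K_meas: "(\<lambda>y. kernel0 M N \<xi> y) \<in> measurable (stateM N) (subprob_algebra (stateM N))"
proof -
  have "(\<lambda>y. distr muX (stateM N) (Phi N y)) \<in> measurable (stateM N) (subprob_algebra (stateM N))"
  proof (rule measurable_distr2)
    show "(\<lambda>(y, x). Phi N y x) \<in> measurable (stateM N \<Otimes>\<^sub>M muX) (stateM N)"
      using Phi_measurable[OF N0] by (simp add: sets_muX cong: measurable_cong_sets)
    show "(\<lambda>_. muX) \<in> measurable (stateM N) (subprob_algebra muX)"
      by (rule measurable_const) (auto simp: space_subprob_algebra prob_muX prob_space_imp_subprob_space)
  qed
  then show ?thesis by (simp add: kernel0_eq)
qed

definition muk :: "nat \<Rightarrow> (nat \<Rightarrow> real) measure" where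
  "muk k = ((\<lambda>m. m \<bind> R) ^^ k) Lm"

lemma muk_0: "muk 0 = Lm" by (simp add: muk_def)
lemma muk_Suc: "muk (Suc k) = muk k \<bind> R" by (simp add: muk_def)

lemma sets_space_muk: "sets (muk k) = sets (stateM N) \<and> space (muk k) = space (stateM N)"
proof (induct k)
  case 0 then show ?case by (simp add: muk_0 sets_Lm space_Lm)
next
  case (Suc k)
  have ne: "space (muk k) \<noteq> {}" using Suc space_stateM_ne by simp
  have "sets (muk (Suc k)) = sets (stateM N)"
    unfolding muk_Suc by (rule sets_bind[OF _ ne]) (simp add: sets_R)
  then show ?case using sets_eq_imp_space_eq by auto
qed

lemma sets_muk[measurable_cong]: "sets (muk k) = sets (stateM N)" using sets_space_muk by blast
lemma space_muk: "space (muk k) = space (stateM N)" using sets_space_muk by blast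

lemma R_meas_muk: "R \<in> measurable (muk k) (subprob_algebra (stateM N))"
  using R_meas by (simp cong: measurable_cong_sets add: sets_muk)

lemma emeasure_muk_Suc: "A \<in> sets (stateM N) \<Longrightarrow> emeasure (muk (Suc k)) A = (\<integral>\<^sup>+y. emeasure (R y) A \<partial>muk k)"
  unfolding muk_Suc by (rule emeasure_bind[OF _ R_meas_muk]) (auto simp: space_muk space_stateM_ne)

lemma muk_props: "emeasure (muk k) (space (stateM N)) = ennreal (p * (1 - p) ^ k) \<and> emeasure (muk k) (space (stateM N) - Delta0 N) = 0"
proof (induct k)
  case 0 then show ?case by (simp add: muk_0 Lm_space Lm_Delta0)
next
  case (Suc k)
  have "emeasure (muk (Suc k)) (space (stateM N)) = (\<integral>\<^sup>+y. ennreal (1 - p) \<partial>muk k)"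
    by (simp add: emeasure_muk_Suc R_space)
  also have "\<dots> = ennreal (1 - p) * ennreal (p * (1 - p) ^ k)" using Suc by (simp add: space_muk)
  also have "\<dots> = ennreal (p * (1 - p) ^ Suc k)"
    using p_pos p_le1 by (simp add: ennreal_mult[symmetric] algebra_simps)
  finally show ?case
    using Delta0_sets[OF N0] by (simp add: emeasure_muk_Suc R_Delta0)
qed

lemma subprob_muk: "subprob_space (muk k)"
proof (rule subprob_spaceI)
  have "p * (1 - p) ^ k \<le> 1 * 1" using p_pos p_le1
    by (intro mult_mono power_le_one) auto
  then show "emeasure (muk k) (space (muk k)) \<le> 1" using muk_props[of k] by (simp add: space_muk)
qed (simp add: space_muk space_stateM_ne)

definition nu :: "(nat \<Rightarrow> real) measure" where
  "nu = count_space UNIV \<bind> muk"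

lemma muk_meas: "muk \<in> measurable (count_space UNIV) (subprob_algebra (stateM N))"
  by (auto simp: space_subprob_algebra subprob_muk sets_muk)

lemma sets_nu[measurable_cong]: "sets nu = sets (stateM N)"
  unfolding nu_def by (rule sets_bind) (auto simp: sets_muk)

lemma space_nu: "space nu = space (stateM N)"
  using sets_eq_imp_space_eq[OF sets_nu] .

lemma emeasure_nu: "A \<in> sets (stateM N) \<Longrightarrow> emeasure nu A = (\<Sum>k. emeasure (muk k) A)"
  unfolding nu_def by (subst emeasure_bind[OF _ muk_meas]) (auto simp: nn_integral_count_space_nat)

lemma geom_sum: "(\<Sum>k. p * (1 - p) ^ k) = 1" and geom_summable: "summable (\<lambda>k. p * (1 - p) ^ k)"
proof -
  have a: "norm (1 - p) < 1" using p_pos p_le1 by auto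
  show "summable (\<lambda>k. p * (1 - p) ^ k)" using summable_geometric[OF a] by (rule summable_mult)
  show "(\<Sum>k. p * (1 - p) ^ k) = 1"
    using suminf_mult[OF summable_geometric[OF a], of p] suminf_geometric[OF a] p_pos by simp
qed

lemma nu_space: "emeasure nu (space (stateM N)) = 1"
proof -
  have "emeasure nu (space (stateM N)) = (\<Sum>k. ennreal (p * (1 - p) ^ k))"
    by (simp add: emeasure_nu muk_props)
  also have "\<dots> = ennreal (\<Sum>k. p * (1 - p) ^ k)"
    using p_pos p_le1 by (intro suminf_ennreal2 geom_summable) auto
  finally show ?thesis by (simp add: geom_sum)
qed

lemma prob_nu: "prob_space nu"
  by (rule prob_spaceI) (simp add: space_nu nu_space)

lemma nu_Delta0c: "emeasure nu (space (stateM N) - Delta0 N) = 0"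
  using Delta0_sets[OF N0] by (simp add: emeasure_nu muk_props)

end




lemma nn_integral_measure_sum:
  fixes \<gamma> :: "'i \<Rightarrow> 'b measure"
  assumes sa: "sets \<alpha> = sets S" and sg: "\<And>i. i \<in> I \<Longrightarrow> sets (\<gamma> i) = sets S" and fin: "finite I"
    and eq: "\<And>A. A \<in> sets S \<Longrightarrow> emeasure \<alpha> A = (\<Sum>i\<in>I. emeasure (\<gamma> i) A)"
    and f: "f \<in> borel_measurable S"
  shows "(\<integral>\<^sup>+x. f x \<partial>\<alpha>) = (\<Sum>i\<in>I. \<integral>\<^sup>+x. f x \<partial>\<gamma> i)"
  using f
proof (induct f rule: borel_measurable_induct)
  case (cong f g)
  have "(\<integral>\<^sup>+x. f x \<partial>\<alpha>) = (\<integral>\<^sup>+x. g x \<partial>\<alpha>)"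
    by (rule nn_integral_cong) (use cong sets_eq_imp_space_eq[OF sa] in auto)
  moreover have "(\<integral>\<^sup>+x. f x \<partial>\<gamma> i) = (\<integral>\<^sup>+x. g x \<partial>\<gamma> i)" if "i \<in> I" for i
    by (rule nn_integral_cong) (use cong sets_eq_imp_space_eq[OF sg[OF that]] in auto)
  ultimately show ?case using cong by simp
next
  case (set A)
  then show ?case using sa sg eq by (simp cong: sum.cong)
next
  case (mult u c)
  have m: "u \<in> borel_measurable \<alpha>" "\<And>i. i \<in> I \<Longrightarrow> u \<in> borel_measurable (\<gamma> i)"
    using mult sa sg by (simp_all cong: measurable_cong_sets)
  have "(\<integral>\<^sup>+x. c * u x \<partial>\<alpha>) = c * (\<Sum>i\<in>I. \<integral>\<^sup>+x. u x \<partial>\<gamma> i)"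
    using m mult by (simp add: nn_integral_cmult)
  also have "\<dots> = (\<Sum>i\<in>I. \<integral>\<^sup>+x. c * u x \<partial>\<gamma> i)"
    using m by (simp add: nn_integral_cmult sum_distrib_left)
  finally show ?case .
next
  case (add u v)
  have m: "u \<in> borel_measurable \<alpha>" "\<And>i. i \<in> I \<Longrightarrow> u \<in> borel_measurable (\<gamma> i)"
     "v \<in> borel_measurable \<alpha>" "\<And>i. i \<in> I \<Longrightarrow> v \<in> borel_measurable (\<gamma> i)"
    using add sa sg by (simp_all cong: measurable_cong_sets)
  have "(\<integral>\<^sup>+x. v x + u x \<partial>\<alpha>) = (\<Sum>i\<in>I. \<integral>\<^sup>+x. v x \<partial>\<gamma> i) + (\<Sum>i\<in>I. \<integral>\<^sup>+x. u x \<partial>\<gamma> i)"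
    using m add by (simp add: nn_integral_add)
  also have "\<dots> = (\<Sum>i\<in>I. \<integral>\<^sup>+x. v x + u x \<partial>\<gamma> i)"
    using m by (simp add: nn_integral_add sum.distrib)
  finally show ?case .
next
  case (seq U)
  have m: "\<And>k. U k \<in> borel_measurable \<alpha>" "\<And>i k. i \<in> I \<Longrightarrow> U k \<in> borel_measurable (\<gamma> i)"
    using seq sa sg by (simp_all cong: measurable_cong_sets)
  have "(\<integral>\<^sup>+x. (SUP k. U k) x \<partial>\<alpha>) = (SUP k. \<integral>\<^sup>+x. U k x \<partial>\<alpha>)"
    unfolding SUP_apply by (rule nn_integral_monotone_convergence_SUP[OF _ m(1)]) (use seq in \<open>auto simp: incseq_def le_fun_def\<close>)
  also have "\<dots> = (SUP k. \<Sum>i\<in>I. \<integral>\<^sup>+x. U k x \<partial>\<gamma> i)" using seq by simp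
  also have "\<dots> = (\<Sum>i\<in>I. SUP k. \<integral>\<^sup>+x. U k x \<partial>\<gamma> i)"
  proof (rule ennreal_SUP_sum)
    fix i assume "i \<in> I"
    show "incseq (\<lambda>k. \<integral>\<^sup>+x. U k x \<partial>\<gamma> i)"
      using seq(4) unfolding incseq_def le_fun_def by (auto intro!: nn_integral_mono)
  qed
  also have "\<dots> = (\<Sum>i\<in>I. \<integral>\<^sup>+x. (SUP k. U k) x \<partial>\<gamma> i)"
  proof (rule sum.cong[OF refl])
    fix i assume i: "i \<in> I"
    show "(SUP k. \<integral>\<^sup>+x. U k x \<partial>\<gamma> i) = (\<integral>\<^sup>+x. (SUP k. U k) x \<partial>\<gamma> i)"
      unfolding SUP_apply by (rule nn_integral_monotone_convergence_SUP[symmetric, OF _ m(2)[OF i]])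
        (use seq in \<open>auto simp: incseq_def le_fun_def\<close>)
  qed
  finally show ?case .
qed

context LPP
begin

lemma AE_Delta:
  assumes "sets Q = sets (stateM N)" "emeasure Q (space (stateM N) - Delta N) = 0"
  shows "AE y in Q. y \<in> Delta N"
proof (rule AE_I')
  show "space (stateM N) - Delta N \<in> null_sets Q"
    using assms Delta_sets[OF N0] by (auto simp: null_sets_def)
  show "{x \<in> space Q. x \<notin> Delta N} \<subseteq> space (stateM N) - Delta N"
    using sets_eq_imp_space_eq[OF assms(1)] by auto
qed

lemma Delta_c_le: "emeasure Q (space (stateM N) - Delta0 N) = 0 \<Longrightarrow> sets Q = sets (stateM N) \<Longrightarrow>
   emeasure Q (space (stateM N) - Delta N) = 0"
  using emeasure_mono[of "space (stateM N) - Delta N" "space (stateM N) - Delta0 N" Q] Delta0_subset[of N]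
    Delta0_sets[OF N0] by auto

lemma Kf_meas: "A \<in> sets (stateM N) \<Longrightarrow> (\<lambda>y. emeasure (kernel0 M N \<xi> y) A) \<in> borel_measurable (stateM N)"
  using measurable_compose[OF K_meas measurable_emeasure_subprob_algebra] by blast

lemma Rf_meas: "A \<in> sets (stateM N) \<Longrightarrow> (\<lambda>y. emeasure (R y) A) \<in> borel_measurable (stateM N)"
  using measurable_compose[OF R_meas measurable_emeasure_subprob_algebra] by blast

lemma K_integral:
  assumes Q: "sets Q = sets (stateM N)" "emeasure Q (space (stateM N) - Delta N) = 0" and A: "A \<in> sets (stateM N)"
  shows "(\<integral>\<^sup>+y. emeasure (kernel0 M N \<xi> y) A \<partial>Q) = emeasure Lm A * emeasure Q (space (stateM N)) + (\<integral>\<^sup>+y. emeasure (R y) A \<partial>Q)"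
proof -
  have "(\<integral>\<^sup>+y. emeasure (kernel0 M N \<xi> y) A \<partial>Q) = (\<integral>\<^sup>+y. emeasure Lm A + emeasure (R y) A \<partial>Q)"
    by (rule nn_integral_cong_AE) (use AE_Delta[OF Q] K_split[OF _ A] in auto)
  also have "\<dots> = (\<integral>\<^sup>+y. emeasure Lm A \<partial>Q) + (\<integral>\<^sup>+y. emeasure (R y) A \<partial>Q)"
    by (rule nn_integral_add) (use Rf_meas[OF A] Q(1) in \<open>simp_all cong: measurable_cong_sets\<close>)
  finally show ?thesis using sets_eq_imp_space_eq[OF Q(1)] by simp
qed

lemma nu_invariant:
  assumes A: "A \<in> sets (stateM N)"
  shows "emeasure nu A = (\<integral>\<^sup>+y. emeasure (kernel0 M N \<xi> y) A \<partial>nu)"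
proof -
  have "(\<integral>\<^sup>+y. emeasure (kernel0 M N \<xi> y) A \<partial>nu) = (\<integral>\<^sup>+k. \<integral>\<^sup>+y. emeasure (kernel0 M N \<xi> y) A \<partial>muk k \<partial>count_space UNIV)"
    unfolding nu_def by (rule nn_integral_bind[OF Kf_meas[OF A] muk_meas])
  also have "\<dots> = (\<Sum>k. emeasure Lm A * ennreal (p * (1 - p) ^ k) + emeasure (muk (Suc k)) A)"
  proof -
    have "(\<integral>\<^sup>+y. emeasure (kernel0 M N \<xi> y) A \<partial>muk k) = emeasure Lm A * ennreal (p * (1 - p) ^ k) + emeasure (muk (Suc k)) A" for k
      using K_integral[OF sets_muk Delta_c_le[OF conjunct2[OF muk_props] sets_muk] A] muk_props[of k]
      by (simp add: emeasure_muk_Suc[OF A])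
    then show ?thesis by (simp add: nn_integral_count_space_nat)
  qed
  also have "\<dots> = emeasure Lm A * (\<Sum>k. ennreal (p * (1 - p) ^ k)) + (\<Sum>k. emeasure (muk (Suc k)) A)"
    by (subst suminf_add[symmetric]) (intro summableI, intro summableI, simp)
  also have "(\<Sum>k. ennreal (p * (1 - p) ^ k)) = 1"
  proof -
    have "(\<Sum>k. ennreal (p * (1 - p) ^ k)) = ennreal (\<Sum>k. p * (1 - p) ^ k)"
      using p_pos p_le1 by (intro suminf_ennreal2 geom_summable) auto
    then show ?thesis by (simp add: geom_sum)
  qed
  also have "emeasure Lm A * 1 + (\<Sum>k. emeasure (muk (Suc k)) A) = (\<Sum>k. emeasure (muk k) A)"
  proof -
    have "(\<lambda>k. emeasure (muk k) A) sums ((\<Sum>k. emeasure (muk (Suc k)) A) + emeasure (muk 0) A)"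
      by (rule sums_Suc) (rule summable_sums, simp)
    then show ?thesis by (simp add: sums_iff muk_0 add.commute)
  qed
  finally show ?thesis using A by (simp add: emeasure_nu)
qed


definition rho :: "(nat \<Rightarrow> real) measure \<Rightarrow> nat \<Rightarrow> (nat \<Rightarrow> real) measure" where
  "rho a t = ((\<lambda>m. m \<bind> R) ^^ t) a"

lemma rho_props:
  assumes sa: "sets a = sets (stateM N)" and pa: "prob_space a"
    and da: "emeasure a (space (stateM N) - Delta N) = 0"
  shows "sets (rho a t) = sets (stateM N) \<and> emeasure (rho a t) (space (stateM N)) = ennreal ((1 - p) ^ t)
     \<and> emeasure (rho a t) (space (stateM N) - Delta N) = 0"
proof (induct t)
  case 0
  have "emeasure a (space (stateM N)) = 1"
    using prob_space.emeasure_space_1[OF pa] sets_eq_imp_space_eq[OF sa] by simp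
  then show ?case using sa da by (simp add: rho_def)
next
  case (Suc t)
  have sp: "space (rho a t) = space (stateM N)" using Suc sets_eq_imp_space_eq by blast
  have ne: "space (rho a t) \<noteq> {}" using sp space_stateM_ne by simp
  have Rm: "R \<in> measurable (rho a t) (subprob_algebra (stateM N))"
    using R_meas Suc by (simp cong: measurable_cong_sets)
  have eq: "rho a (Suc t) = rho a t \<bind> R" by (simp add: rho_def)
  have s1: "sets (rho a (Suc t)) = sets (stateM N)"
    unfolding eq by (rule sets_bind[OF _ ne]) (simp add: sets_R)
  have "emeasure (rho a (Suc t)) (space (stateM N)) = (\<integral>\<^sup>+y. ennreal (1 - p) \<partial>rho a t)"
    unfolding eq by (subst emeasure_bind[OF ne Rm]) (auto simp: R_space)
  also have "\<dots> = ennreal ((1 - p) ^ Suc t)"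
    using Suc sp p_pos p_le1 by (simp add: ennreal_mult[symmetric])
  finally have s2: "emeasure (rho a (Suc t)) (space (stateM N)) = ennreal ((1 - p) ^ Suc t)" .
  have "emeasure (rho a (Suc t)) (space (stateM N) - Delta N) = (\<integral>\<^sup>+y. 0 \<partial>rho a t)"
    unfolding eq using Delta_sets[OF N0]
    by (subst emeasure_bind[OF ne Rm]) (auto simp: Delta_c_le[OF R_Delta0 sets_R] intro!: nn_integral_cong)
  then show ?case using s1 s2 by simp
qed

lemma sum_opt: "finite S \<Longrightarrow> (\<Sum>i\<in>insert None (Some ` S). g i) = g None + (\<Sum>k\<in>S. g (Some k))"
  by (simp add: sum.reindex)

lemma fin_emeasure: "subprob_space Q \<Longrightarrow> emeasure Q A = ennreal (measure Q A)"
  by (simp add: finite_measure.emeasure_eq_measure subprob_space_def)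

lemma seq_bound:
  assumes sa: "\<And>t. sets (\<alpha> t) = sets (stateM N)" and pa: "\<And>t. prob_space (\<alpha> t)"
    and da: "\<And>t. emeasure (\<alpha> t) (space (stateM N) - Delta N) = 0"
    and st: "\<And>t A. A \<in> sets (stateM N) \<Longrightarrow> emeasure (\<alpha> (Suc t)) A = (\<integral>\<^sup>+y. emeasure (kernel0 M N \<xi> y) A \<partial>\<alpha> t)"
    and A: "A \<in> sets (stateM N)"
  shows "\<bar>measure (\<alpha> t) A - measure nu A\<bar> \<le> (1 - p) ^ t"
proof -
  let ?r = "rho (\<alpha> 0)"
  note rp = rho_props[OF sa pa da]
  have rep: "\<forall>A\<in>sets (stateM N). emeasure (\<alpha> t) A = emeasure (?r t) A + (\<Sum>k<t. emeasure (muk k) A)"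
  proof (induct t)
    case 0 then show ?case by (simp add: rho_def)
  next
    case (Suc t)
    show ?case
    proof
      fix A assume A: "A \<in> sets (stateM N)"
      define G where "G = (\<lambda>i. case i of None \<Rightarrow> ?r t | Some k \<Rightarrow> muk k)"
      define I where "I = insert None (Some ` {..<t})"
      have finI: "finite I" by (simp add: I_def)
      have sG: "\<And>i. i \<in> I \<Longrightarrow> sets (G i) = sets (stateM N)"
        using rp by (auto simp: G_def I_def sets_muk)
      have eqG: "\<And>B. B \<in> sets (stateM N) \<Longrightarrow> emeasure (\<alpha> t) B = (\<Sum>i\<in>I. emeasure (G i) B)"
        using Suc by (simp add: I_def sum.reindex G_def)
      have "emeasure (\<alpha> (Suc t)) A = emeasure Lm A * emeasure (\<alpha> t) (space (stateM N)) + (\<integral>\<^sup>+y. emeasure (R y) A \<partial>\<alpha> t)"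
        using st[OF A] K_integral[OF sa da A] by simp
      also have "emeasure (\<alpha> t) (space (stateM N)) = 1"
        using prob_space.emeasure_space_1[OF pa] sets_eq_imp_space_eq[OF sa] by simp
      also have "(\<integral>\<^sup>+y. emeasure (R y) A \<partial>\<alpha> t) = (\<Sum>i\<in>I. \<integral>\<^sup>+y. emeasure (R y) A \<partial>G i)"
        by (rule nn_integral_measure_sum[OF sa sG finI eqG Rf_meas[OF A]])
      also have "\<dots> = emeasure (?r (Suc t)) A + (\<Sum>k<t. emeasure (muk (Suc k)) A)"
      proof -
        have ne: "space (?r t) \<noteq> {}" using rp sets_eq_imp_space_eq space_stateM_ne by metis
        have Rm: "R \<in> measurable (?r t) (subprob_algebra (stateM N))"
          using R_meas rp by (simp cong: measurable_cong_sets)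
        have "emeasure (?r (Suc t)) A = (\<integral>\<^sup>+y. emeasure (R y) A \<partial>?r t)"
          by (simp add: rho_def emeasure_bind[OF _ _ A] ne[unfolded rho_def] Rm[unfolded rho_def])
        then show ?thesis
          by (simp add: I_def sum.reindex G_def emeasure_muk_Suc[OF A])
      qed
      finally show "emeasure (\<alpha> (Suc t)) A = emeasure (?r (Suc t)) A + (\<Sum>k<Suc t. emeasure (muk k) A)"
        by (simp add: sum.lessThan_Suc_shift muk_0 ac_simps del: sum.lessThan_Suc)
    qed
  qed
  define a where "a k = measure (muk k) A" for k
  have a_nn: "0 \<le> a k" for k by (simp add: a_def)
  have a_le: "a k \<le> p * (1 - p) ^ k" for k
  proof -
    have "emeasure (muk k) A \<le> emeasure (muk k) (space (stateM N))"
      using A by (intro emeasure_mono) (auto simp: sets.sets_into_space)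
    then have "emeasure (muk k) A \<le> ennreal (p * (1 - p) ^ k)"
      using muk_props[of k] by simp
    then have "ennreal (a k) \<le> ennreal (p * (1 - p) ^ k)"
      by (simp only: a_def fin_emeasure[OF subprob_muk])
    then show ?thesis using p_pos p_le1 by (simp add: ennreal_le_iff)
  qed
  have a_sum: "summable a"
    by (rule summable_comparison_test'[OF geom_summable]) (use a_nn a_le in auto)
  have nuA: "measure nu A = (\<Sum>k. a k)"
  proof -
    have "ennreal (measure nu A) = (\<Sum>k. ennreal (a k))"
      using A by (simp add: emeasure_nu a_def fin_emeasure[OF subprob_muk]
          fin_emeasure[OF prob_space_imp_subprob_space[OF prob_nu], symmetric])
    also have "\<dots> = ennreal (\<Sum>k. a k)" by (rule suminf_ennreal2[OF a_nn a_sum])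
    finally show ?thesis using a_nn by (simp add: suminf_nonneg[OF a_sum])
  qed
  define r where "r = measure (?r t) A"
  have sub_r: "subprob_space (?r t)"
  proof (rule subprob_spaceI)
    have "(1 - p) ^ t \<le> 1" using p_pos p_le1 by (intro power_le_one) auto
    then show "emeasure (?r t) (space (?r t)) \<le> 1"
      using rp sets_eq_imp_space_eq by (metis ennreal_le_1)
    show "space (?r t) \<noteq> {}" using rp sets_eq_imp_space_eq space_stateM_ne by metis
  qed
  have r_nn: "0 \<le> r" by (simp add: r_def)
  have r_le: "r \<le> (1 - p) ^ t"
  proof -
    have "emeasure (?r t) A \<le> emeasure (?r t) (space (stateM N))"
      using A rp by (intro emeasure_mono) (auto simp: sets.sets_into_space)
    then have "emeasure (?r t) A \<le> ennreal ((1 - p) ^ t)"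
      using rp by simp
    then have "ennreal r \<le> ennreal ((1 - p) ^ t)"
      by (simp only: r_def fin_emeasure[OF sub_r])
    then show ?thesis using p_pos p_le1 by (simp add: ennreal_le_iff)
  qed
  have alA: "measure (\<alpha> t) A = r + (\<Sum>k<t. a k)"
  proof -
    have "ennreal (measure (\<alpha> t) A) = ennreal r + (\<Sum>k<t. ennreal (a k))"
      using rep A by (simp add: r_def a_def fin_emeasure[OF subprob_muk] fin_emeasure[OF sub_r]
          fin_emeasure[OF prob_space_imp_subprob_space[OF pa], symmetric])
    also have "\<dots> = ennreal (r + (\<Sum>k<t. a k))"
      using a_nn r_nn by (simp add: sum_nonneg)
    finally have "ennreal (measure (\<alpha> t) A) = ennreal (r + (\<Sum>k<t. a k))" .
    then show ?thesis using a_nn r_nn by (subst (asm) ennreal_inj) (auto simp: sum_nonneg)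
  qed
  define T where "T = (\<Sum>k. a (k + t))"
  have splitT: "(\<Sum>k. a k) = T + (\<Sum>k<t. a k)"
    unfolding T_def by (rule suminf_split_initial_segment[OF a_sum])
  have T_nn: "0 \<le> T" unfolding T_def
    by (rule suminf_nonneg) (use a_sum summable_iff_shift[of a t] a_nn in auto)
  have T_le: "T \<le> (1 - p) ^ t"
  proof -
    have "T \<le> (\<Sum>k. (1 - p) ^ t * (p * (1 - p) ^ k))"
      unfolding T_def
    proof (rule suminf_le)
      show "a (k + t) \<le> (1 - p) ^ t * (p * (1 - p) ^ k)" for k
        using a_le[of "k + t"] by (simp add: power_add algebra_simps)
      show "summable (\<lambda>k. a (k + t))" using a_sum summable_iff_shift[of a t] by simp
      show "summable (\<lambda>k. (1 - p) ^ t * (p * (1 - p) ^ k))" by (rule summable_mult[OF geom_summable])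
    qed
    also have "\<dots> = (1 - p) ^ t" using suminf_mult[OF geom_summable, of "(1 - p) ^ t"] geom_sum by simp
    finally show ?thesis .
  qed
  show ?thesis using alA nuA splitT T_nn T_le r_nn r_le by simp
qed

end




context LPP
begin

definition "Jt t = {(i, j, s). i < N \<and> j < N \<and> 1 \<le> s \<and> s \<le> t}"
definition "Kt t = {(i, j, s). i < N \<and> j < N \<and> s = Suc t}"
definition "U t \<omega> = (\<lambda>k\<in>Jt t. (\<lambda>(i, j, s). \<xi> i j s) k \<omega>)"
definition "V t \<omega> = (\<lambda>k\<in>Kt t. (\<lambda>(i, j, s). \<xi> i j s) k \<omega>)"
definition "Ygen y0 t (u :: nat \<times> nat \<times> nat \<Rightarrow> real) = Yproc N (\<lambda>i j s u. u (i, j, s)) y0 t u"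
definition "Z y0 t \<omega> = shift0 N (Yproc N \<xi> y0 t \<omega>)"

lemma Ygen_0: "Ygen y0 0 u = y0" by (simp add: Ygen_def)
lemma Ygen_Suc: "Ygen y0 (Suc t) u = step N (Ygen y0 t u) (\<lambda>i j. u (i, j, Suc t))" by (simp add: Ygen_def)

lemma Yproc_Ygen: "t \<le> T \<Longrightarrow> Yproc N \<xi> y0 t \<omega> = Ygen y0 t (U T \<omega>)"
proof (induct t)
  case 0 then show ?case by (simp add: Ygen_0)
next
  case (Suc t)
  then have IH: "Yproc N \<xi> y0 t \<omega> = Ygen y0 t (U T \<omega>)" by simp
  show ?case unfolding Yproc.simps Ygen_Suc IH
    by (rule step_cong) (use Suc.prems in \<open>auto simp: U_def Jt_def\<close>)
qed

lemma Ygen_meas: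
  assumes y0: "y0 \<in> Delta N"
  shows "t \<le> T \<Longrightarrow> Ygen y0 t \<in> measurable (PiM (Jt T) (\<lambda>_. borel)) (stateM N)"
proof (induct t)
  case 0 then show ?case using y0 by (simp add: Ygen_0[abs_def] Delta_def)
next
  case (Suc t)
  let ?g = "\<lambda>u. \<lambda>q\<in>I2. u (fst q, snd q, Suc t)"
  have g: "?g \<in> measurable (PiM (Jt T) (\<lambda>_. borel)) (matM N)"
    unfolding matM_def
    by (rule measurable_restrict) (use Suc.prems in \<open>auto simp: Jt_def intro!: measurable_component_singleton\<close>)
  have "(\<lambda>u. (\<lambda>(y, x). step N y (\<lambda>i j. x (i, j))) (Ygen y0 t u, ?g u)) \<in> measurable (PiM (Jt T) (\<lambda>_. borel)) (stateM N)"
    by (rule measurable_compose[OF measurable_Pair step_measurable]) (use Suc g in auto)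
  moreover have "(\<lambda>(y, x). step N y (\<lambda>i j. x (i, j))) (Ygen y0 t u, ?g u) = Ygen y0 (Suc t) u" for u
    unfolding Ygen_Suc by (simp, rule step_cong) auto
  ultimately show ?case by simp
qed

lemma U_meas: "U T \<in> measurable M (PiM (Jt T) (\<lambda>_. borel))"
  unfolding U_def by (rule measurable_restrict) (auto simp: Jt_def intro!: rv_xi)

lemma V_meas: "V t \<in> measurable M (PiM (Kt t) (\<lambda>_. borel))"
  unfolding V_def by (rule measurable_restrict) (auto simp: Kt_def intro!: rv_xi)

lemma Z_meas: "y0 \<in> Delta N \<Longrightarrow> Z y0 t \<in> measurable M (stateM N)"
proof -
  assume y0: "y0 \<in> Delta N"
  have "(shift0 N \<circ> Ygen y0 t) \<circ> U t \<in> measurable M (stateM N)"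
    by (intro measurable_comp[OF U_meas] measurable_comp[OF Ygen_meas[OF y0] shift0_measurable[OF N0]]) simp
  moreover have "((shift0 N \<circ> Ygen y0 t) \<circ> U t) = Z y0 t"
    by (simp add: fun_eq_iff Z_def Yproc_Ygen[OF order_refl])
  ultimately show ?thesis by simp
qed

lemma Z_Delta0: "y0 \<in> Delta N \<Longrightarrow> Z y0 t \<omega> \<in> Delta0 N"
  by (cases t) (auto simp: Z_def intro!: shift0_Delta0 step_Delta N0)

lemma Z_Suc: "Z y0 (Suc t) \<omega> = Phi N (Z y0 t \<omega>) (X (Suc t) \<omega>)"
proof -
  have "Z y0 (Suc t) \<omega> = shift0 N (step N (Yproc N \<xi> y0 t \<omega>) (\<lambda>i j. \<xi> i j (Suc t) \<omega>))"
    by (simp add: Z_def)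
  also have "\<dots> = shift0 N (step N (Z y0 t \<omega>) (\<lambda>i j. \<xi> i j (Suc t) \<omega>))"
    unfolding Z_def by (rule step_shift0_shift0[OF N0, symmetric])
  also have "\<dots> = Phi N (Z y0 t \<omega>) (X (Suc t) \<omega>)"
    unfolding Phi_def by (rule arg_cong[where f="shift0 N"], rule step_cong) (auto simp: X_def)
  finally show ?thesis .
qed

lemma joint_law:
  assumes y0: "y0 \<in> Delta N"
  shows "distr M (stateM N \<Otimes>\<^sub>M matM N) (\<lambda>\<omega>. (Z y0 t \<omega>, X (Suc t) \<omega>))
       = distr M (stateM N) (Z y0 t) \<Otimes>\<^sub>M muX"
proof -
  have ind0: "indep_var (PiM (Jt t) (\<lambda>_. borel)) (U t) (PiM (Kt t) (\<lambda>_. borel)) (V t)"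
    unfolding U_def V_def
    by (rule indep_var_restrict[OF indep]) (auto simp: Jt_def Kt_def)
  let ?Y1 = "shift0 N \<circ> Ygen y0 t"
  let ?Y2 = "\<lambda>v. \<lambda>q\<in>I2. v (fst q, snd q, Suc t)"
  have Y1: "?Y1 \<in> measurable (PiM (Jt t) (\<lambda>_. borel)) (stateM N)"
    by (intro measurable_comp[OF Ygen_meas[OF y0] shift0_measurable[OF N0]]) simp
  have Y2: "?Y2 \<in> measurable (PiM (Kt t) (\<lambda>_. borel)) (matM N)"
    unfolding matM_def
    by (rule measurable_restrict) (auto simp: Kt_def intro!: measurable_component_singleton)
  have e1: "?Y1 \<circ> U t = Z y0 t" by (simp add: fun_eq_iff Z_def Yproc_Ygen[OF order_refl])
  have e2: "?Y2 \<circ> V t = X (Suc t)" by (auto simp: V_def X_def Kt_def fun_eq_iff)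
  have UV: "distr M (PiM (Jt t) (\<lambda>_. borel)) (U t) \<Otimes>\<^sub>M distr M (PiM (Kt t) (\<lambda>_. borel)) (V t)
      = distr M (PiM (Jt t) (\<lambda>_. borel) \<Otimes>\<^sub>M PiM (Kt t) (\<lambda>_. borel)) (\<lambda>\<omega>. (U t \<omega>, V t \<omega>))"
    using ind0 unfolding indep_var_distribution_eq by blast
  have pUV: "(\<lambda>\<omega>. (U t \<omega>, V t \<omega>)) \<in> measurable M (PiM (Jt t) (\<lambda>_. borel) \<Otimes>\<^sub>M PiM (Kt t) (\<lambda>_. borel))"
    by (intro measurable_Pair U_meas V_meas)
  have pY: "(\<lambda>(u, v). (?Y1 u, ?Y2 v)) \<in> measurable (PiM (Jt t) (\<lambda>_. borel) \<Otimes>\<^sub>M PiM (Kt t) (\<lambda>_. borel)) (stateM N \<Otimes>\<^sub>M matM N)"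
  proof -
    have a: "(\<lambda>x. ?Y1 (fst x)) \<in> measurable (PiM (Jt t) (\<lambda>_. borel) \<Otimes>\<^sub>M PiM (Kt t) (\<lambda>_. borel)) (stateM N)"
      by (rule measurable_compose[OF measurable_fst Y1])
    have b: "(\<lambda>x. ?Y2 (snd x)) \<in> measurable (PiM (Jt t) (\<lambda>_. borel) \<Otimes>\<^sub>M PiM (Kt t) (\<lambda>_. borel)) (matM N)"
      by (rule measurable_compose[OF measurable_snd Y2])
    show ?thesis unfolding case_prod_beta' by (rule measurable_Pair[OF a b])
  qed
  have sfV: "sigma_finite_measure (distr (distr M (PiM (Kt t) (\<lambda>_. borel)) (V t)) (matM N) ?Y2)"
  proof -
    have P: "prob_space (distr M (PiM (Kt t) (\<lambda>_. borel)) (V t))" by (rule prob_space_distr[OF V_meas])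
    have m: "?Y2 \<in> measurable (distr M (PiM (Kt t) (\<lambda>_. borel)) (V t)) (matM N)"
      using Y2 by (simp cong: measurable_cong_sets)
    show ?thesis by (rule prob_space_imp_sigma_finite[OF prob_space.prob_space_distr[OF P m]])
  qed
  have "distr M (stateM N \<Otimes>\<^sub>M matM N) (\<lambda>\<omega>. (Z y0 t \<omega>, X (Suc t) \<omega>))
      = distr M (stateM N \<Otimes>\<^sub>M matM N) ((\<lambda>(u, v). (?Y1 u, ?Y2 v)) \<circ> (\<lambda>\<omega>. (U t \<omega>, V t \<omega>)))"
  proof -
    have "(\<lambda>(u, v). (?Y1 u, ?Y2 v)) \<circ> (\<lambda>\<omega>. (U t \<omega>, V t \<omega>)) = (\<lambda>\<omega>. ((?Y1 \<circ> U t) \<omega>, (?Y2 \<circ> V t) \<omega>))"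
      by (simp add: comp_def)
    also have "\<dots> = (\<lambda>\<omega>. (Z y0 t \<omega>, X (Suc t) \<omega>))" unfolding e1 e2 ..
    finally show ?thesis by simp
  qed
  also have "\<dots> = distr (distr M (PiM (Jt t) (\<lambda>_. borel)) (U t) \<Otimes>\<^sub>M distr M (PiM (Kt t) (\<lambda>_. borel)) (V t)) (stateM N \<Otimes>\<^sub>M matM N) (\<lambda>(u, v). (?Y1 u, ?Y2 v))"
    unfolding UV by (rule distr_distr[symmetric, OF pY pUV])
  also have "\<dots> = distr (distr M (PiM (Jt t) (\<lambda>_. borel)) (U t)) (stateM N) ?Y1 \<Otimes>\<^sub>M distr (distr M (PiM (Kt t) (\<lambda>_. borel)) (V t)) (matM N) ?Y2"
    by (rule pair_measure_distr[symmetric]) (use Y1[unfolded comp_def] Y2 sfV in \<open>simp_all\<close>)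
  also have "distr (distr M (PiM (Jt t) (\<lambda>_. borel)) (U t)) (stateM N) ?Y1 = distr M (stateM N) (Z y0 t)"
    by (subst distr_distr[OF Y1 U_meas]) (simp add: e1)
  also have "distr (distr M (PiM (Kt t) (\<lambda>_. borel)) (V t)) (matM N) ?Y2 = muX"
    by (subst distr_distr[OF Y2 V_meas]) (simp add: e2 law_X muX_eq)
  finally show ?thesis .
qed

lemma markov:
  assumes y0: "y0 \<in> Delta N" and A: "A \<in> sets (stateM N)"
  shows "emeasure (distr M (stateM N) (Z y0 (Suc t))) A
       = (\<integral>\<^sup>+y. emeasure (kernel0 M N \<xi> y) A \<partial>distr M (stateM N) (Z y0 t))"
proof -
  interpret PX: prob_space muX by (rule prob_muX)
  let ?S = "(\<lambda>(y, x). Phi N y x) -` A \<inter> space (stateM N \<Otimes>\<^sub>M matM N)"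
  have S: "?S \<in> sets (stateM N \<Otimes>\<^sub>M matM N)"
    using measurable_sets[OF Phi_measurable[OF N0] A] .
  have pm: "(\<lambda>\<omega>. (Z y0 t \<omega>, X (Suc t) \<omega>)) \<in> measurable M (stateM N \<Otimes>\<^sub>M matM N)"
    by (intro measurable_Pair Z_meas[OF y0] rv_X) simp
  have "emeasure (distr M (stateM N) (Z y0 (Suc t))) A = emeasure M (Z y0 (Suc t) -` A \<inter> space M)"
    using A by (rule emeasure_distr[OF Z_meas[OF y0]])
  also have "Z y0 (Suc t) -` A \<inter> space M = (\<lambda>\<omega>. (Z y0 t \<omega>, X (Suc t) \<omega>)) -` ?S \<inter> space M"
    using measurable_space[OF pm] by (auto simp: Z_Suc)
  also have "emeasure M \<dots> = emeasure (distr M (stateM N \<Otimes>\<^sub>M matM N) (\<lambda>\<omega>. (Z y0 t \<omega>, X (Suc t) \<omega>))) ?S"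
    by (rule emeasure_distr[symmetric, OF pm S])
  also have "\<dots> = emeasure (distr M (stateM N) (Z y0 t) \<Otimes>\<^sub>M muX) ?S"
    by (simp add: joint_law[OF y0])
  also have "\<dots> = (\<integral>\<^sup>+y. emeasure muX (Pair y -` ?S) \<partial>distr M (stateM N) (Z y0 t))"
    by (rule PX.emeasure_pair_measure_alt) (use S in \<open>simp add: sets_muX cong: sets_pair_measure_cong\<close>)
  also have "\<dots> = (\<integral>\<^sup>+y. emeasure (kernel0 M N \<xi> y) A \<partial>distr M (stateM N) (Z y0 t))"
  proof (rule nn_integral_cong)
    fix y assume "y \<in> space (distr M (stateM N) (Z y0 t))"
    then have y: "y \<in> space (stateM N)" by simp
    have "Pair y -` ?S = Phi N y -` A \<inter> space muX"
      using y by (auto simp: space_pair_measure space_muX)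
    then show "emeasure muX (Pair y -` ?S) = emeasure (kernel0 M N \<xi> y) A"
      using A by (simp add: kernel0_eq emeasure_distr Phi_meas_muX)
  qed
  finally show ?thesis .
qed

end




context LPP
begin

lemma tv_bound:
  assumes sa: "sets a = sets (stateM N)"
    and b: "\<And>A. A \<in> sets (stateM N) \<Longrightarrow> \<bar>measure a A - measure nu A\<bar> \<le> c"
  shows "tv_dist a nu \<le> c" "0 \<le> tv_dist a nu"
proof -
  have ne: "sets a \<noteq> {}" by auto
  show "tv_dist a nu \<le> c" unfolding tv_dist_def
    by (rule cSUP_least[OF ne]) (use b sa in auto)
  have bdd: "bdd_above ((\<lambda>A. \<bar>measure a A - measure nu A\<bar>) ` sets a)"
    by (rule bdd_aboveI[of _ c]) (use b sa in auto)
  have "\<bar>measure a {} - measure nu {}\<bar> \<le> tv_dist a nu"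
    unfolding tv_dist_def by (rule cSUP_upper[OF _ bdd]) simp
  then show "0 \<le> tv_dist a nu" by simp
qed

lemma nu_Delta0: "emeasure nu (Delta0 N) = 1"
proof -
  have "emeasure nu (Delta0 N) + emeasure nu (space (stateM N) - Delta0 N) = emeasure nu (Delta0 N \<union> (space (stateM N) - Delta0 N))"
    by (rule plus_emeasure) (use Delta0_sets[OF N0] in \<open>auto simp: sets_nu\<close>)
  also have "Delta0 N \<union> (space (stateM N) - Delta0 N) = space (stateM N)"
    using Delta0_subset[of N] by (auto simp: Delta_def)
  finally show ?thesis by (simp add: nu_Delta0c nu_space)
qed

lemma inv_nu: "invariant0 M N \<xi> nu"
  unfolding invariant0_def using sets_nu prob_nu nu_Delta0 nu_invariant by auto

lemma process_bound:
  assumes y0: "y0 \<in> Delta N" and A: "A \<in> sets (stateM N)"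
  shows "\<bar>measure (distr M (stateM N) (Z y0 t)) A - measure nu A\<bar> \<le> (1 - p) ^ t"
proof (rule seq_bound[where \<alpha>="\<lambda>t. distr M (stateM N) (Z y0 t)", OF _ _ _ _ A])
  show "sets (distr M (stateM N) (Z y0 t)) = sets (stateM N)" for t by simp
  show "prob_space (distr M (stateM N) (Z y0 t))" for t by (rule prob_space_distr[OF Z_meas[OF y0]])
  show "emeasure (distr M (stateM N) (Z y0 t)) (space (stateM N) - Delta N) = 0" for t
  proof -
    have "Z y0 t -` (space (stateM N) - Delta N) \<inter> space M = {}"
      using Z_Delta0[OF y0] Delta0_subset by blast
    then show ?thesis using Delta_sets[OF N0] by (simp add: emeasure_distr[OF Z_meas[OF y0]])
  qed
  show "emeasure (distr M (stateM N) (Z y0 (Suc t))) B = (\<integral>\<^sup>+y. emeasure (kernel0 M N \<xi> y) B \<partial>distr M (stateM N) (Z y0 t))"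
    if "B \<in> sets (stateM N)" for t B by (rule markov[OF y0 that])
qed

lemma unique:
  assumes inv: "invariant0 M N \<xi> \<nu>'"
  shows "\<nu>' = nu"
proof -
  have s: "sets \<nu>' = sets (stateM N)" and P: "prob_space \<nu>'" and D: "emeasure \<nu>' (Delta0 N) = 1"
    and I: "\<And>A. A \<in> sets (stateM N) \<Longrightarrow> emeasure \<nu>' A = (\<integral>\<^sup>+ y. emeasure (kernel0 M N \<xi> y) A \<partial>\<nu>')"
    using inv unfolding invariant0_def by auto
  interpret P': prob_space \<nu>' by (rule P)
  have sp: "space \<nu>' = space (stateM N)" using sets_eq_imp_space_eq[OF s] .
  have c0: "emeasure \<nu>' (space (stateM N) - Delta0 N) = 0"
  proof -
    have one: "emeasure \<nu>' (space (stateM N)) = 1" using P'.emeasure_space_1 sp by simp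
    show ?thesis using emeasure_compl[of "Delta0 N" \<nu>'] D Delta0_sets[OF N0] s sp one by simp
  qed
  have bnd: "\<bar>measure \<nu>' A - measure nu A\<bar> \<le> (1 - p) ^ t" if A: "A \<in> sets (stateM N)" for A t
    by (rule seq_bound[where \<alpha>="\<lambda>_. \<nu>'", OF s P Delta_c_le[OF c0 s] _ A]) (use I in auto)
  have eq: "measure \<nu>' A = measure nu A" if A: "A \<in> sets (stateM N)" for A
  proof -
    have lim: "(\<lambda>t. (1 - p) ^ t) \<longlonglongrightarrow> 0" by (rule LIMSEQ_power_zero) (use p_pos p_le1 in auto)
    have "\<bar>measure \<nu>' A - measure nu A\<bar> \<le> 0"
      by (rule LIMSEQ_le_const[OF lim]) (use bnd[OF A] in auto)
    then show ?thesis by simp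
  qed
  show ?thesis
  proof (rule measure_eqI)
    show "sets \<nu>' = sets nu" using s sets_nu by simp
    fix A assume "A \<in> sets \<nu>'"
    then have A: "A \<in> sets (stateM N)" using s by simp
    have "emeasure \<nu>' A = ennreal (measure \<nu>' A)" by (rule P'.emeasure_eq_measure)
    also have "\<dots> = ennreal (measure nu A)" using eq[OF A] by simp
    also have "\<dots> = emeasure nu A" using fin_emeasure[OF prob_space_imp_subprob_space[OF prob_nu]] by simp
    finally show "emeasure \<nu>' A = emeasure nu A" .
  qed
qed

theorem main:
  "\<exists>\<nu>. invariant0 M N \<xi> \<nu>
           \<and> (\<forall>\<nu>'. invariant0 M N \<xi> \<nu>' \<longrightarrow> \<nu>' = \<nu>)
           \<and> (\<forall>y0 \<in> Delta N.
                (\<lambda>t. tv_dist (distr M (stateM N) (\<lambda>\<omega>. shift0 N (Yproc N \<xi> y0 t \<omega>))) \<nu>)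
                  \<longlonglongrightarrow> 0)
           \<and> (\<exists>\<delta>>0. \<forall>y0 \<in> Delta N. \<forall>t.
                tv_dist (distr M (stateM N) (\<lambda>\<omega>. shift0 N (Yproc N \<xi> y0 t \<omega>))) \<nu> \<le> (1 - \<delta>) ^ t)"
proof -
  have Zeq: "(\<lambda>\<omega>. shift0 N (Yproc N \<xi> y0 t \<omega>)) = Z y0 t" for y0 t by (simp add: fun_eq_iff Z_def)
  have tvb: "tv_dist (distr M (stateM N) (Z y0 t)) nu \<le> (1 - p) ^ t \<and> 0 \<le> tv_dist (distr M (stateM N) (Z y0 t)) nu"
    if y0: "y0 \<in> Delta N" for y0 t
    using tv_bound[OF _ process_bound[OF y0]] by simp
  have lim: "(\<lambda>t. (1 - p) ^ t) \<longlonglongrightarrow> 0" by (rule LIMSEQ_power_zero) (use p_pos p_le1 in auto)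
  have conv: "(\<lambda>t. tv_dist (distr M (stateM N) (Z y0 t)) nu) \<longlonglongrightarrow> 0" if y0: "y0 \<in> Delta N" for y0
    by (rule tendsto_sandwich[OF _ _ tendsto_const lim]) (use tvb[OF y0] in auto)
  show ?thesis
    using inv_nu unique conv tvb p_pos unfolding Zeq by blast
qed

end



theorem proposition2p1:
  fixes M :: "'a measure" and N :: nat and \<xi> :: "nat \<Rightarrow> nat \<Rightarrow> nat \<Rightarrow> 'a \<Rightarrow> real"
  assumes "prob_space M"
    and "N \<ge> 1"
    and indep: "prob_space.indep_vars M (\<lambda>_. borel) (\<lambda>(i, j, s). \<xi> i j s)
                  {(i, j, s). i < N \<and> j < N \<and> s \<ge> 1}"
    and ident: "\<And>i j s. i < N \<Longrightarrow> j < N \<Longrightarrow> s \<ge> 1 \<Longrightarrow>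
                  distr M borel (\<xi> i j s) = distr M borel (\<xi> 0 0 1)"
  shows "\<exists>\<nu>. invariant0 M N \<xi> \<nu>
           \<and> (\<forall>\<nu>'. invariant0 M N \<xi> \<nu>' \<longrightarrow> \<nu>' = \<nu>)
           \<and> (\<forall>y0 \<in> Delta N.
                (\<lambda>t. tv_dist (distr M (stateM N) (\<lambda>\<omega>. shift0 N (Yproc N \<xi> y0 t \<omega>))) \<nu>)
                  \<longlonglongrightarrow> 0)
           \<and> (\<exists>\<delta>>0. \<forall>y0 \<in> Delta N. \<forall>t.
                tv_dist (distr M (stateM N) (\<lambda>\<omega>. shift0 N (Yproc N \<xi> y0 t \<omega>))) \<nu> \<le> (1 - \<delta>) ^ t)"
proof -
  interpret L: LPP M N \<xi>
    by (rule LPP.intro[OF assms(1) LPP_axioms.intro[OF assms(2) indep ident]])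
  show ?thesis by (rule L.main)
qed

end
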